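(* Let $\omega\in\mathbb{F}_8$ be a root of $y^3+y+1$, so $\mathbb{F}_8=\mathbb{F}_2(\omega)$, and let $\mathcal{B}=\{1<\omega<\omega^2\}$ be the ordered basis of $\mathbb{F}_8$ over $\mathbb{F}_2$. Suppose $G=G_1+\omega G_2+\omega^2 G_3\in M_{k\times n}(\mathbb{F}_8)$, with $G_i\in M_{k\times n}(\mathbb{F}_2)$ for $1\le i\le 3$, generates a linear code $C$ over $\mathbb{F}_8$. Then the subfield code $C^{(2)}$ of $C$ with respect to $\mathcal{B}$ is the binary linear code generated by the $3k\times n$ matrix $$G^{(2)}=\begin{pmatrix}G_1\\ G_3\\ G_2\end{pmatrix}.$$ Moreover, if $D=D_1+\omega D_2+\omega^2 D_3\subseteq\mathbb{F}_8^m$ with $D_i\subseteq\mathbb{F}_2^m$ ($1\le i\le 3$), then $C_D^{(2)}=C_{D^{(2)}}$, where $$D^{(2)}=\{(d_1,d_3,d_2)\in(\mathbb{F}_2^m)^3 : d_i\in D_i,\ 1\le i\le 3\},$$ the coordinate of $C_{D^{(2)}}$ indexed by $(d_1,d_3,d_2)$ corresponding to the coordinate of $C_D$ indexed by $d_1+\omega d_2+\omega^2 d_3$.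
   Context: For sets $D_1,D_2,D_3\subseteq\mathbb{F}_2^m$, $D_1+\omega D_2+\omega^2D_3=\{d_1+\omega d_2+\omega^2 d_3: d_i\in D_i\}\subseteq\mathbb{F}_8^m$. For an ordered finite set $D\subseteq\mathbb{F}_q^m$, $C_D=\{(v\cdot d)_{d\in D}: v\in\mathbb{F}_q^m\}$, where $v\cdot d=\sum_{i=1}^m v_id_i$. Given a linear code $C$ over $\mathbb{F}_{q^r}$ with generator matrix $(g_{ij})$ and an ordered basis $\{b_1<\dots<b_r\}$ of $\mathbb{F}_{q^r}$ over $\mathbb{F}_q$, the subfield code $C^{(q)}$ is the $\mathbb{F}_q$-linear code generated by the matrix obtained by replacing each entry $g_{ij}$ by the column $(\mathrm{Tr}_{q^r/q}(g_{ij}b_1),\dots,\mathrm{Tr}_{q^r/q}(g_{ij}b_r))^T$; here $C_D^{(2)}$ denotes the subfield code of $C_D$. *)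

theory Defs
  imports Main
begin

text \<open>We work inside an abstract finite field 'a with 8 elements
(any such field is F_8).
Vectors of length n are functions nat => 'a, normalised to be 0 at indices >= n.
Matrices are functions nat => nat => 'a (row index, column index) with explicit
dimensions.\<close>

definition F2 :: "'a::field set" where
  "F2 = {0, 1}"

definition binvecs :: "nat \<Rightarrow> (nat \<Rightarrow> 'a::field) set" where
  "binvecs m = {d. (\<forall>i<m. d i \<in> F2) \<and> (\<forall>i\<ge>m. d i = 0)}"

text \<open>The code of length n spanned by the k rows of the k x n matrix G,
with coefficients from the scalar set S (S = UNIV: linear code over 'a;
S = F2: binary linear code).\<close>
definition code_gen :: "'a::field set \<Rightarrow> nat \<Rightarrow> nat \<Rightarrow> (nat \<Rightarrow> nat \<Rightarrow> 'a) \<Rightarrow> (nat \<Rightarrow> 'a) set" where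
  "code_gen S k n G =
     {(\<lambda>j. if j < n then (\<Sum>i<k. c i * G i j) else 0) | c. \<forall>i<k. c i \<in> S}"

definition trace2 :: "nat \<Rightarrow> 'a::field \<Rightarrow> 'a" where
  "trace2 r x = (\<Sum>t<r. x ^ (2 ^ t))"

text \<open>Subfield (binary) code of the code generated by the k x n matrix G over F_{2^r},
w.r.t. the ordered basis bs = [b_1,...,b_r]: each entry g_ij is replaced by the
column (Tr(g_ij b_1),...,Tr(g_ij b_r))^T, giving an (r*k) x n matrix whose row
i*r + l (l < r) is (Tr(g_ij b_(l+1)))_j.\<close>
definition subfield_matrix :: "'a::field list \<Rightarrow> (nat \<Rightarrow> nat \<Rightarrow> 'a) \<Rightarrow> nat \<Rightarrow> nat \<Rightarrow> 'a" where
  "subfield_matrix bs G i' j =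
     trace2 (length bs) (G (i' div length bs) j * bs ! (i' mod length bs))"

definition subfield_code :: "'a::field list \<Rightarrow> nat \<Rightarrow> nat \<Rightarrow> (nat \<Rightarrow> nat \<Rightarrow> 'a) \<Rightarrow> (nat \<Rightarrow> 'a) set" where
  "subfield_code bs k n G = code_gen F2 (length bs * k) n (subfield_matrix bs G)"

definition stack3 :: "nat \<Rightarrow> (nat \<Rightarrow> nat \<Rightarrow> 'a) \<Rightarrow> (nat \<Rightarrow> nat \<Rightarrow> 'a) \<Rightarrow> (nat \<Rightarrow> nat \<Rightarrow> 'a) \<Rightarrow> nat \<Rightarrow> nat \<Rightarrow> 'a" where
  "stack3 k A B C i j = (if i < k then A i j else if i < 2 * k then B (i - k) j else C (i - 2 * k) j)"

text \<open>Defining-set code C_D for an ordered set D (given as a list ds of vectors of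
length m): C_D = {(v . d)_{d in D} : v in S^m}, where S is the field of scalars.\<close>
definition code_D :: "'a::field set \<Rightarrow> nat \<Rightarrow> (nat \<Rightarrow> 'a) list \<Rightarrow> (nat \<Rightarrow> 'a) set" where
  "code_D S m ds =
     {(\<lambda>j. if j < length ds then (\<Sum>i<m. v i * (ds ! j) i) else 0) | v. \<forall>i<m. v i \<in> S}"

definition gen_matrix_D :: "(nat \<Rightarrow> 'a) list \<Rightarrow> nat \<Rightarrow> nat \<Rightarrow> 'a" where
  "gen_matrix_D ds i j = (ds ! j) i"

definition concat3 :: "nat \<Rightarrow> (nat \<Rightarrow> 'a::zero) \<Rightarrow> (nat \<Rightarrow> 'a) \<Rightarrow> (nat \<Rightarrow> 'a) \<Rightarrow> nat \<Rightarrow> 'a" where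
  "concat3 m x y z i = (if i < m then x i else if i < 2 * m then y (i - m)
                        else if i < 3 * m then z (i - 2 * m) else 0)"

end

theory Submission
  imports Defs "HOL-Library.FuncSet"
begin

lemma even_inv_card:
  fixes A :: "'a::ab_group_add set"
  assumes "finite A" "\<forall>x\<in>A. -x \<in> A \<and> -x \<noteq> x"
  shows "even (card A)"
  using assms
proof (induction "card A" arbitrary: A rule: less_induct)
  case less
  show ?case
  proof (cases "A = {}")
    case True then show ?thesis by simp
  next
    case False
    then obtain x where x: "x \<in> A" by blast
    define B where "B = A - {x, -x}"
    have mx: "-x \<in> A" "-x \<noteq> x" using less.prems x by auto
    have s: "{x, -x} \<subseteq> A" "card {x, -x} = 2" using x mx by auto
    have "card {x,-x} \<le> card A" using s less.prems(1) by (intro card_mono) auto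
    then have cB: "card A = card B + 2"
      using less.prems(1) s unfolding B_def
      by (simp add: card_Diff_subset finite_subset)
    have "\<forall>y\<in>B. -y \<in> B \<and> -y \<noteq> y"
      using less.prems(2) unfolding B_def
      by (auto simp: minus_equation_iff)
    moreover have "finite B" using less.prems(1) B_def by simp
    ultimately have "even (card B)" using less.hyps cB by simp
    then show ?thesis using cB by simp
  qed
qed

lemma char2:
  assumes "card (UNIV :: 'a::{field,finite} set) = 8"
  shows "(2::'a) = 0"
proof (rule ccontr)
  assume h: "(2::'a) \<noteq> 0"
  have "\<forall>x\<in>(UNIV - {0::'a}). -x \<in> UNIV - {0} \<and> -x \<noteq> x"
  proof
    fix x :: 'a assume "x \<in> UNIV - {0}"
    then have "x \<noteq> 0" by simp
    moreover have "-x = x \<Longrightarrow> 2 * x = 0" by (metis mult_2 neg_eq_iff_add_eq_0)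
    ultimately show "-x \<in> UNIV - {0} \<and> -x \<noteq> x" using h by auto
  qed
  then have "even (card (UNIV - {0::'a}))" by (intro even_inv_card) auto
  moreover have "card (UNIV - {0::'a}) = 7" using assms by (simp add: card_Diff_singleton)
  ultimately show False by simp
qed

lemma code_gen_perm_sub:
  assumes bij: "bij_betw \<sigma> {..<N} {..<N}"
    and M: "\<forall>i<N. \<forall>j<n. M1 i j = M2 (\<sigma> i) j"
  shows "code_gen S N n M1 \<subseteq> code_gen S N n M2"
proof
  fix w assume "w \<in> code_gen S N n M1"
  then obtain c where w: "w = (\<lambda>j. if j < n then (\<Sum>i<N. c i * M1 i j) else 0)"
    and c: "\<forall>i<N. c i \<in> S" unfolding code_gen_def by blast
  define c' where "c' = c \<circ> inv_into {..<N} \<sigma>"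
  have cc: "c' (\<sigma> i) = c i" if "i < N" for i
    using that bij unfolding c'_def by (simp add: bij_betw_def inv_into_f_f)
  have "\<forall>i<N. c' i \<in> S"
  proof (intro allI impI)
    fix i assume "i < N"
    then have "inv_into {..<N} \<sigma> i \<in> {..<N}"
      using bij by (metis bij_betw_def inv_into_into lessThan_iff)
    then show "c' i \<in> S" using c unfolding c'_def by simp
  qed
  moreover have "w = (\<lambda>j. if j < n then (\<Sum>i<N. c' i * M2 i j) else 0)"
  proof
    fix j
    show "w j = (if j < n then (\<Sum>i<N. c' i * M2 i j) else 0)"
    proof (cases "j < n")
      case True
      have "(\<Sum>i<N. c i * M1 i j) = (\<Sum>i<N. c' (\<sigma> i) * M2 (\<sigma> i) j)"
        using M True cc by (intro sum.cong) auto
      also have "\<dots> = (\<Sum>i<N. c' i * M2 i j)"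
        using sum.reindex_bij_betw[OF bij, of "\<lambda>i. c' i * M2 i j"] by simp
      finally show ?thesis using w True by simp
    qed (simp add: w)
  qed
  ultimately show "w \<in> code_gen S N n M2" unfolding code_gen_def by blast
qed

lemma code_gen_perm:
  assumes bij: "bij_betw \<sigma> {..<N} {..<N}"
    and M: "\<forall>i<N. \<forall>j<n. M1 i j = M2 (\<sigma> i) j"
  shows "code_gen S N n M1 = code_gen S N n M2"
proof
  show "code_gen S N n M1 \<subseteq> code_gen S N n M2" by (rule code_gen_perm_sub[OF bij M])
  have bij2: "bij_betw (inv_into {..<N} \<sigma>) {..<N} {..<N}" using bij by (rule bij_betw_inv_into)
  have "\<forall>i<N. \<forall>j<n. M2 i j = M1 (inv_into {..<N} \<sigma> i) j"
  proof (intro allI impI)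
    fix i j assume i: "i < N" and j: "j < n"
    have "inv_into {..<N} \<sigma> i \<in> {..<N}" using bij2 i by (metis bij_betw_apply lessThan_iff)
    moreover have "\<sigma> (inv_into {..<N} \<sigma> i) = i" using bij i
      by (simp add: bij_betw_def f_inv_into_f)
    ultimately show "M2 i j = M1 (inv_into {..<N} \<sigma> i) j" using M j by auto
  qed
  then show "code_gen S N n M2 \<subseteq> code_gen S N n M1" by (rule code_gen_perm_sub[OF bij2])
qed

definition sig3 :: "nat \<Rightarrow> nat \<Rightarrow> nat" where
  "sig3 k i = (i mod 3) * k + i div 3"

lemma sig3_bij: "bij_betw (sig3 k) {..<3*k} {..<3*k}"
proof (rule bij_betwI[where g = "\<lambda>r. 3 * (r mod k) + r div k"])
  show "sig3 k \<in> {..<3 * k} \<rightarrow> {..<3 * k}"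
  proof
    fix i assume "i \<in> {..<3*k}"
    then have "i div 3 < k" by auto
    moreover have "i mod 3 \<le> 2" by simp
    then have "(i mod 3) * k \<le> 2 * k" by (rule mult_le_mono1)
    ultimately have "(i mod 3) * k + i div 3 < 2 * k + k" by linarith
    then show "sig3 k i \<in> {..<3 * k}" by (simp add: sig3_def)
  qed
  show "(\<lambda>r. 3 * (r mod k) + r div k) \<in> {..<3 * k} \<rightarrow> {..<3 * k}"
  proof
    fix r assume r: "r \<in> {..<3*k}"
    then have "k > 0" by auto
    then have "r mod k < k" by simp
    moreover have "r div k < 3" using r by (simp add: div_less_iff_less_mult)
    ultimately show "3 * (r mod k) + r div k \<in> {..<3 * k}" by simp
  qed
  show "3 * (sig3 k x mod k) + sig3 k x div k = x" if "x \<in> {..<3*k}" for x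
  proof -
    have "x div 3 < k" using that by auto
    then show ?thesis unfolding sig3_def by simp
  qed
  show "sig3 k (3 * (y mod k) + y div k) = y" if "y \<in> {..<3*k}" for y
  proof -
    have "y div k < 3" using that by (simp add: div_less_iff_less_mult)
    moreover have "k > 0" using that by auto
    ultimately show ?thesis unfolding sig3_def by simp
  qed
qed

lemma trace3: "trace2 3 x = x + x^2 + x^4"
  by (simp add: trace2_def numeral_3_eq_3 lessThan_Suc)

lemma cert: "(L::'a::comm_ring_1) - R = A * p + 2 * B \<Longrightarrow> p = 0 \<Longrightarrow> (2::'a) = 0 \<Longrightarrow> L = R"
  by simp

lemma key:
  fixes \<omega> :: "'a::{field,finite}"
  assumes card8: "card (UNIV :: 'a set) = 8"
    and root: "\<omega> ^ 3 + \<omega> + 1 = 0"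
    and g: "g1 \<in> F2" "g2 \<in> F2" "g3 \<in> F2"
    and r: "r < 3"
  shows "trace2 3 ((g1 + \<omega> * g2 + \<omega>^2 * g3) * [1, \<omega>, \<omega>^2] ! r) = [g1, g3, g2] ! r"
proof -
  have two: "(2::'a) = 0" using char2[OF card8] .
  have add: "trace2 3 (a + b) = trace2 3 a + trace2 3 b" for a b :: 'a
  proof -
    have sq: "(x + y)^2 = x^2 + y^2" for x y :: 'a
      by (simp add: power2_sum two)
    have "(a + b)^4 = ((a+b)^2)^2" by (simp flip: power_mult)
    also have "\<dots> = (a^2)^2 + (b^2)^2" by (simp add: sq)
    also have "\<dots> = a^4 + b^4" by (simp flip: power_mult)
    finally show ?thesis unfolding trace3 using sq[of a b] by (simp add: algebra_simps)
  qed
  have sc: "g \<in> F2 \<Longrightarrow> trace2 3 (g * a) = g * trace2 3 a" for g a :: 'a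
    by (auto simp: F2_def trace3)
  have lin: "trace2 3 ((g1 + \<omega> * g2 + \<omega>^2 * g3) * b)
      = g1 * trace2 3 b + g2 * trace2 3 (\<omega> * b) + g3 * trace2 3 (\<omega>^2 * b)" for b
  proof -
    have "(g1 + \<omega> * g2 + \<omega>^2 * g3) * b = g1 * b + g2 * (\<omega> * b) + g3 * (\<omega>^2 * b)"
      by (simp add: algebra_simps)
    then show ?thesis using add sc g by simp
  qed
  have t1: "trace2 3 ((1::'a)) = 1"
  proof -
    have "((1::'a)) + ((1::'a))^2 + ((1::'a))^4 - 1 = (0) * (\<omega>^3 + \<omega> + 1) + 2 * (1)" by simp
    then show ?thesis unfolding trace3 by (rule cert[OF _ root two])
  qed
  have t2: "trace2 3 (\<omega> * 1) = 0"
  proof -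
    have "(\<omega> * 1) + (\<omega> * 1)^2 + (\<omega> * 1)^4 - 0 = ((1)*\<omega>^1) * (\<omega>^3 + \<omega> + 1) + 2 * (0)" by algebra
    then show ?thesis unfolding trace3 by (rule cert[OF _ root two])
  qed
  have t3: "trace2 3 (\<omega>^2 * 1) = 0"
  proof -
    have "(\<omega>^2 * 1) + (\<omega>^2 * 1)^2 + (\<omega>^2 * 1)^4 - 0 = ((2)*\<omega>^0 + (2)*\<omega>^1 + (-1)*\<omega>^2 + (-1)*\<omega>^3 + (1)*\<omega>^5) * (\<omega>^3 + \<omega> + 1) + 2 * ((-1)*\<omega>^0 + (-2)*\<omega>^1)" by algebra
    then show ?thesis unfolding trace3 by (rule cert[OF _ root two])
  qed
  have t4: "trace2 3 (\<omega> * \<omega>) = 0"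
  proof -
    have "(\<omega> * \<omega>) + (\<omega> * \<omega>)^2 + (\<omega> * \<omega>)^4 - 0 = ((2)*\<omega>^0 + (2)*\<omega>^1 + (-1)*\<omega>^2 + (-1)*\<omega>^3 + (1)*\<omega>^5) * (\<omega>^3 + \<omega> + 1) + 2 * ((-1)*\<omega>^0 + (-2)*\<omega>^1)" by algebra
    then show ?thesis unfolding trace3 by (rule cert[OF _ root two])
  qed
  have t5: "trace2 3 (\<omega>^2 * \<omega>) = 1"
  proof -
    have "(\<omega>^2 * \<omega>) + (\<omega>^2 * \<omega>)^2 + (\<omega>^2 * \<omega>)^4 - 1 = ((3)*\<omega>^0 + (-3)*\<omega>^1 + (-3)*\<omega>^2 + (1)*\<omega>^3 + (2)*\<omega>^4 + (1)*\<omega>^5 + (-1)*\<omega>^6 + (-1)*\<omega>^7 + (1)*\<omega>^9) * (\<omega>^3 + \<omega> + 1) + 2 * ((-2)*\<omega>^0 + (3)*\<omega>^2)" by algebra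
    then show ?thesis unfolding trace3 by (rule cert[OF _ root two])
  qed
  have t6: "trace2 3 (\<omega> * \<omega>^2) = 1"
  proof -
    have "(\<omega> * \<omega>^2) + (\<omega> * \<omega>^2)^2 + (\<omega> * \<omega>^2)^4 - 1 = ((3)*\<omega>^0 + (-3)*\<omega>^1 + (-3)*\<omega>^2 + (1)*\<omega>^3 + (2)*\<omega>^4 + (1)*\<omega>^5 + (-1)*\<omega>^6 + (-1)*\<omega>^7 + (1)*\<omega>^9) * (\<omega>^3 + \<omega> + 1) + 2 * ((-2)*\<omega>^0 + (3)*\<omega>^2)" by algebra
    then show ?thesis unfolding trace3 by (rule cert[OF _ root two])
  qed
  have t7: "trace2 3 (\<omega>^2 * \<omega>^2) = 0"
  proof -
    have "(\<omega>^2 * \<omega>^2) + (\<omega>^2 * \<omega>^2)^2 + (\<omega>^2 * \<omega>^2)^4 - 0 = ((-2)*\<omega>^0 + (-6)*\<omega>^1 + (-2)*\<omega>^2 + (4)*\<omega>^3 + (3)*\<omega>^4 + (-1)*\<omega>^5 + (-3)*\<omega>^6 + (2)*\<omega>^8 + (1)*\<omega>^9 + (-1)*\<omega>^10 + (-1)*\<omega>^11 + (1)*\<omega>^13) * (\<omega>^3 + \<omega> + 1) + 2 * ((1)*\<omega>^0 + (4)*\<omega>^1 + (4)*\<omega>^2)" by algebra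
    then show ?thesis unfolding trace3 by (rule cert[OF _ root two])
  qed
  consider "r = 0" | "r = 1" | "r = 2" using r by linarith
  then show ?thesis
  proof cases
    case 1 then show ?thesis using lin[of 1] t1 t2 t3 t4 t5 t6 t7 by simp
  next
    case 2 then show ?thesis using lin[of \<omega>] t1 t2 t3 t4 t5 t6 t7 by simp
  next
    case 3 then show ?thesis using lin[of "\<omega>^2"] t1 t2 t3 t4 t5 t6 t7 by simp
  qed
qed

theorem mainTheorem1:
  fixes \<omega> :: "'a::{field,finite}"
    and k n m :: nat
    and G G1 G2 G3 :: "nat \<Rightarrow> nat \<Rightarrow> 'a"
    and D1 D2 D3 :: "(nat \<Rightarrow> 'a) set"
    and ts :: "((nat \<Rightarrow> 'a) \<times> (nat \<Rightarrow> 'a) \<times> (nat \<Rightarrow> 'a)) list"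
  assumes card8: "card (UNIV :: 'a set) = 8"
    and root: "\<omega> ^ 3 + \<omega> + 1 = 0"
    and G_bin: "\<forall>i<k. \<forall>j<n. G1 i j \<in> F2 \<and> G2 i j \<in> F2 \<and> G3 i j \<in> F2"
    and G_dec: "\<forall>i<k. \<forall>j<n. G i j = G1 i j + \<omega> * G2 i j + \<omega> ^ 2 * G3 i j"
    and D_bin: "D1 \<subseteq> binvecs m" "D2 \<subseteq> binvecs m" "D3 \<subseteq> binvecs m"
    and ts_enum: "distinct ts" "set ts = D1 \<times> D2 \<times> D3"
  shows "subfield_code [1, \<omega>, \<omega> ^ 2] k n G = code_gen F2 (3 * k) n (stack3 k G1 G3 G2)
    \<and> (let ds = map (\<lambda>(d1, d2, d3). (\<lambda>i. d1 i + \<omega> * d2 i + \<omega> ^ 2 * d3 i)) ts;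
           ds2 = map (\<lambda>(d1, d2, d3). concat3 m d1 d3 d2) ts
       in subfield_code [1, \<omega>, \<omega> ^ 2] m (length ds) (gen_matrix_D ds) = code_D F2 (3 * m) ds2)"
proof -
  let ?bs = "[1, \<omega>, \<omega> ^ 2]"
  have len: "length ?bs = 3" by simp
  have part1: "subfield_code ?bs k n G = code_gen F2 (3 * k) n (stack3 k G1 G3 G2)"
    unfolding subfield_code_def len
  proof (intro code_gen_perm[OF sig3_bij] allI impI)
    fix i j assume i: "i < 3 * k" and j: "j < n"
    define q where "q = i div 3"
    define r where "r = i mod 3"
    have q: "q < k" using i q_def by auto
    have r: "r < 3" using r_def by simp
    have sk: "sig3 k i = r * k + q" unfolding sig3_def q_def r_def by simp
    have "subfield_matrix ?bs G i j = trace2 3 (G q j * ?bs ! r)"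
      unfolding subfield_matrix_def q_def r_def len by (rule refl)
    also have "\<dots> = [G1 q j, G3 q j, G2 q j] ! r"
      using G_dec G_bin q j key[OF card8 root _ _ _ r, of "G1 q j" "G2 q j" "G3 q j"] by simp
    also have "\<dots> = stack3 k G1 G3 G2 (sig3 k i) j"
    proof -
      consider "r = 0" | "r = 1" | "r = 2" using r by linarith
      then show ?thesis
      proof cases
        case 1 then show ?thesis using q sk by (simp add: stack3_def)
      next
        case 2 then show ?thesis using q sk by (simp add: stack3_def)
      next
        case 3 then show ?thesis using q sk by (simp add: stack3_def)
      qed
    qed
    finally show "subfield_matrix ?bs G i j = stack3 k G1 G3 G2 (sig3 k i) j" .
  qed
  define ds where "ds = map (\<lambda>(d1, d2, d3). (\<lambda>i. d1 i + \<omega> * d2 i + \<omega> ^ 2 * d3 i)) ts"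
  define ds2 where "ds2 = map (\<lambda>(d1, d2, d3). concat3 m d1 d3 d2) ts"
  have cD: "code_D F2 (3 * m) ds2 = code_gen F2 (3 * m) (length ds) (\<lambda>i j. (ds2 ! j) i)"
    unfolding code_D_def code_gen_def ds_def ds2_def by simp
  have part2: "subfield_code ?bs m (length ds) (gen_matrix_D ds) = code_D F2 (3 * m) ds2"
    unfolding subfield_code_def cD len
  proof (intro code_gen_perm[OF sig3_bij] allI impI)
    fix i j assume i: "i < 3 * m" and j: "j < length ds"
    define q where "q = i div 3"
    define r where "r = i mod 3"
    have q: "q < m" using i q_def by auto
    have r: "r < 3" using r_def by simp
    have sk: "sig3 m i = r * m + q" unfolding sig3_def q_def r_def by simp
    have jt: "j < length ts" using j ds_def by simp
    obtain d1 d2 d3 where tj: "ts ! j = (d1, d2, d3)" by (cases "ts ! j") auto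
    have "(d1, d2, d3) \<in> D1 \<times> D2 \<times> D3" using tj jt ts_enum(2) by (metis nth_mem)
    then have db: "d1 \<in> binvecs m" "d2 \<in> binvecs m" "d3 \<in> binvecs m" using D_bin by auto
    then have dF: "d1 q \<in> F2" "d2 q \<in> F2" "d3 q \<in> F2" using q unfolding binvecs_def by auto
    have dsj: "ds ! j = (\<lambda>i. d1 i + \<omega> * d2 i + \<omega> ^ 2 * d3 i)" using jt tj ds_def by simp
    have ds2j: "ds2 ! j = concat3 m d1 d3 d2" using jt tj ds2_def by simp
    have "subfield_matrix ?bs (gen_matrix_D ds) i j = trace2 3 ((ds ! j) q * ?bs ! r)"
      unfolding subfield_matrix_def q_def r_def gen_matrix_D_def len by (rule refl)
    also have "\<dots> = [d1 q, d3 q, d2 q] ! r"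
      using dsj key[OF card8 root dF r] by simp
    also have "\<dots> = (ds2 ! j) (sig3 m i)"
    proof -
      consider "r = 0" | "r = 1" | "r = 2" using r by linarith
      then show ?thesis
      proof cases
        case 1 then show ?thesis using q sk by (simp add: ds2j concat3_def)
      next
        case 2 then show ?thesis using q sk by (simp add: ds2j concat3_def)
      next
        case 3 then show ?thesis using q sk by (simp add: ds2j concat3_def)
      qed
    qed
    finally show "subfield_matrix ?bs (gen_matrix_D ds) i j = (ds2 ! j) (sig3 m i)" .
  qed
  show ?thesis using part1 part2 unfolding ds_def ds2_def Let_def by simp
qed

end
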